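(* For all integers $d\ge0$, $0\le k\le d$ and $i\ge1$, $$\dot{\mathcal{F}}_{d,k,d-k}>\dot{\mathcal{F}}_{d,k+i,d-k+i}>0.$$
   Context: Let $P_k$ denote the classical Legendre polynomial of degree $k$ on $[-1,1]$, normalized so that $P_k(1)=1$ (orthogonal with respect to $\int_{-1}^1\cdot\,dt$). For integers $a,b,c\ge0$, $\dot{\mathcal{F}}_{a,b,c}:=\int_{-1}^1P_a(\tau)P_b(\tau)P_c(\tau)\,d\tau$. *)

theory Defs
  imports "HOL-Analysis.Analysis"
begin

text \<open>Classical Legendre polynomials, normalised by P_k(1) = 1, via Bonnet's recurrence
  (n+2) P_(n+2)(x) = (2n+3) x P_(n+1)(x) - (n+1) P_n(x), with P_0 = 1, P_1 = x.\<close>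
fun legendreP :: "nat \<Rightarrow> real \<Rightarrow> real" where
  "legendreP 0 x = 1"
| "legendreP (Suc 0) x = x"
| "legendreP (Suc (Suc n)) x =
     ((2 * real n + 3) * x * legendreP (Suc n) x - (real n + 1) * legendreP n x) / (real n + 2)"

definition legendre_triple :: "nat \<Rightarrow> nat \<Rightarrow> nat \<Rightarrow> real" where
  "legendre_triple a b c =
     integral {-1..1} (\<lambda>t. legendreP a t * legendreP b t * legendreP c t)"

end

theory Submission
  imports Defs
begin


lemma nat2_induct: assumes "P 0" "P (Suc 0)" "\<And>n. P n \<Longrightarrow> P (Suc n) \<Longrightarrow> P (Suc (Suc n))"
  shows "P n"
proof -
  have "P n \<and> P (Suc n)" by (induction n) (use assms in auto)
  then show ?thesis by simp
qed

lemma P_SS: "(real n + 2) * legendreP (Suc (Suc n)) x = (2 * real n + 3) * x * legendreP (Suc n) x - (real n + 1) * legendreP n x"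
proof -
  have nz: "real n + 2 \<noteq> 0" by linarith
  show ?thesis using nz by simp
qed

lemma P_cont: "continuous_on S (\<lambda>x. legendreP n x)"
  by (induction n rule: nat2_induct) (auto intro!: continuous_intros)

lemma P_rec': "(2 * real a + 1) * (x * legendreP a x) = (real a + 1) * legendreP (Suc a) x + real a * legendreP (a - 1) x"
proof (cases a)
  case 0 then show ?thesis by simp
next
  case (Suc n)
  show ?thesis using P_SS[of n x] Suc by (simp add: algebra_simps)
qed

lemma triple_int: "(\<lambda>t. legendreP a t * legendreP b t * legendreP c t) integrable_on {-1..1}"
  by (intro integrable_continuous_interval continuous_intros P_cont)

lemma T_eq1: "integral {-1..1} (\<lambda>t. t * legendreP a t * legendreP b t * legendreP c t)
  = ((real a + 1) * legendre_triple (Suc a) b c + real a * legendre_triple (a - 1) b c) / (2 * real a + 1)"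
proof -
  have nz: "2 * real a + 1 \<noteq> 0" by linarith
  have "(\<lambda>t. t * legendreP a t * legendreP b t * legendreP c t) =
     (\<lambda>t. ((real a + 1) / (2 * real a + 1)) * (legendreP (Suc a) t * legendreP b t * legendreP c t)
        + (real a / (2 * real a + 1)) * (legendreP (a - 1) t * legendreP b t * legendreP c t))"
  proof
    fix t
    have "t * legendreP a t = ((real a + 1) * legendreP (Suc a) t + real a * legendreP (a - 1) t) / (2 * real a + 1)"
      using P_rec'[of a t] nz by (simp add: eq_divide_eq mult.commute)
    then have "t * legendreP a t * legendreP b t * legendreP c t = 
       ((real a + 1) * legendreP (Suc a) t + real a * legendreP (a - 1) t) * (legendreP b t * legendreP c t) / (2 * real a + 1)"
      by simp
    also have "\<dots> = ((real a + 1) * (legendreP (Suc a) t * legendreP b t * legendreP c t) + real a * (legendreP (a - 1) t * legendreP b t * legendreP c t)) / (2 * real a + 1)"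
      by (simp add: algebra_simps)
    also have "\<dots> = ((real a + 1) / (2 * real a + 1)) * (legendreP (Suc a) t * legendreP b t * legendreP c t)
        + (real a / (2 * real a + 1)) * (legendreP (a - 1) t * legendreP b t * legendreP c t)"
      by (simp add: divide_inverse algebra_simps)
    finally show "t * legendreP a t * legendreP b t * legendreP c t = ((real a + 1) / (2 * real a + 1)) * (legendreP (Suc a) t * legendreP b t * legendreP c t)
        + (real a / (2 * real a + 1)) * (legendreP (a - 1) t * legendreP b t * legendreP c t)" .
  qed
  then have "integral {-1..1} (\<lambda>t. t * legendreP a t * legendreP b t * legendreP c t) =
     ((real a + 1) / (2 * real a + 1)) * legendre_triple (Suc a) b c + (real a / (2 * real a + 1)) * legendre_triple (a - 1) b c"
    unfolding legendre_triple_def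
    apply (simp only:)
    apply (subst integral_add)
      apply (intro integrable_continuous_interval continuous_intros P_cont)+
    apply (simp only: integral_mult_right)
    done
  then show ?thesis by (simp add: divide_inverse algebra_simps)
qed

lemma triple_sym1: "legendre_triple a b c = legendre_triple b a c"
  by (simp add: legendre_triple_def ac_simps)
lemma triple_sym2: "legendre_triple a b c = legendre_triple a c b"
  by (simp add: legendre_triple_def ac_simps)

lemma F_rec: "((real a + 1) * legendre_triple (Suc a) b c + real a * legendre_triple (a - 1) b c) / (2 * real a + 1)
  = ((real b + 1) * legendre_triple a (Suc b) c + real b * legendre_triple a (b - 1) c) / (2 * real b + 1)"
proof -
  have "integral {-1..1} (\<lambda>t. t * legendreP a t * legendreP b t * legendreP c t)
     = integral {-1..1} (\<lambda>t. t * legendreP b t * legendreP a t * legendreP c t)"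
    by (simp add: ac_simps)
  then show ?thesis unfolding T_eq1 by (simp add: triple_sym1[of _ a])
qed

fun D :: "nat \<Rightarrow> real \<Rightarrow> real" where
  "D 0 x = 0"
| "D (Suc 0) x = 1"
| "D (Suc (Suc n)) x = ((2 * real n + 3) * (legendreP (Suc n) x + x * D (Suc n) x) - (real n + 1) * D n x) / (real n + 2)"

lemma D_SS: "(real n + 2) * D (Suc (Suc n)) x = (2 * real n + 3) * (legendreP (Suc n) x + x * D (Suc n) x) - (real n + 1) * D n x"
proof -
  have nz: "real n + 2 \<noteq> 0" by linarith
  show ?thesis using nz by simp
qed

lemma P_deriv: "(legendreP n has_real_derivative D n x) (at x)"
proof (induction n rule: nat2_induct)
  case (3 n)
  have "((\<lambda>x. (2 * real n + 3) * x * legendreP (Suc n) x - (real n + 1) * legendreP n x) has_real_derivative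
     (2 * real n + 3) * (legendreP (Suc n) x + x * D (Suc n) x) - (real n + 1) * D n x) (at x)"
    using 3 by (auto intro!: derivative_eq_intros simp: algebra_simps)
  from DERIV_cdivide[OF this, of "real n + 2"] show ?case
    by (simp add: legendreP.simps(3)[abs_def])
qed (auto intro!: derivative_eq_intros)

lemma P_one: "legendreP n 1 = 1"
  by (induction n rule: nat2_induct) (simp_all add: field_simps)
lemma P_mone: "legendreP n (-1) = (-1)^n"
  by (induction n rule: nat2_induct) (simp_all add: field_simps)

declare legendreP.simps(3)[simp del] D.simps(3)[simp del]

lemma DAB: "D (Suc n) x - D (n - 1) x = (2 * real n + 1) * legendreP n x
   \<and> x * D (Suc n) x - D n x = (real n + 1) * legendreP (Suc n) x"
proof (induction n rule: nat2_induct)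
  case 1 then show ?case by simp
next
  case 2 then show ?case by (simp add: field_simps D.simps(3) legendreP.simps(3))
next
  case (3 n)
  have A1: "D (Suc (Suc n)) x - D n x = (2 * real n + 3) * legendreP (Suc n) x" using 3(2) by simp
  have B1: "x * D (Suc (Suc n)) x - D (Suc n) x = (real n + 2) * legendreP (Suc (Suc n)) x" using 3(2) by (simp add: add.commute add.assoc)
  have B0: "x * D (Suc n) x - D n x = (real n + 1) * legendreP (Suc n) x" using 3(1) by simp
  have DD: "(real n + 3) * D (Suc (Suc (Suc n))) x = (2 * real n + 5) * (legendreP (Suc (Suc n)) x + x * D (Suc (Suc n)) x) - (real n + 2) * D (Suc n) x"
    using D_SS[of "Suc n" x] by (simp add: algebra_simps)
  have PP: "(real n + 3) * legendreP (Suc (Suc (Suc n))) x = (2 * real n + 5) * x * legendreP (Suc (Suc n)) x - (real n + 2) * legendreP (Suc n) x"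
    using P_SS[of "Suc n" x] by (simp add: algebra_simps)
  have B1': "x * D (Suc (Suc n)) x = D (Suc n) x + (real n + 2) * legendreP (Suc (Suc n)) x"
    using B1 by simp
  have DD': "(real n + 3) * D (Suc (Suc (Suc n))) x = (2 * real n + 5) * (legendreP (Suc (Suc n)) x + (D (Suc n) x + (real n + 2) * legendreP (Suc (Suc n)) x)) - (real n + 2) * D (Suc n) x"
    using DD by (simp only: B1')
  have A2: "D (Suc (Suc (Suc n))) x - D (Suc n) x = (2 * real n + 5) * legendreP (Suc (Suc n)) x"
  proof -
    have "(real n + 3) * (D (Suc (Suc (Suc n))) x - D (Suc n) x) = (real n + 3) * ((2 * real n + 5) * legendreP (Suc (Suc n)) x)"
      using DD' by (simp add: algebra_simps)
    moreover have "real n + 3 \<noteq> 0" by linarith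
    ultimately show ?thesis by simp
  qed
  have B2: "x * D (Suc (Suc (Suc n))) x - D (Suc (Suc n)) x = (real n + 3) * legendreP (Suc (Suc (Suc n))) x"
  proof -
    have e1: "D (Suc (Suc (Suc n))) x = D (Suc n) x + (2 * real n + 5) * legendreP (Suc (Suc n)) x" using A2 by simp
    have e2: "x * D (Suc n) x = D n x + (real n + 1) * legendreP (Suc n) x" using B0 by simp
    have e3: "D (Suc (Suc n)) x = D n x + (2 * real n + 3) * legendreP (Suc n) x" using A1 by simp
    have "x * D (Suc (Suc (Suc n))) x - D (Suc (Suc n)) x = x * D (Suc n) x + (2 * real n + 5) * x * legendreP (Suc (Suc n)) x - D (Suc (Suc n)) x"
      unfolding e1 by (simp add: algebra_simps)
    also have "\<dots> = (2 * real n + 5) * x * legendreP (Suc (Suc n)) x - (real n + 2) * legendreP (Suc n) x"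
      unfolding e2 e3 by (simp add: algebra_simps)
    also have "\<dots> = (real n + 3) * legendreP (Suc (Suc (Suc n))) x"
      using PP by simp
    finally show ?thesis .
  qed
  show ?case using A2 B2 by (simp add: add.commute)
qed

lemma int_P: "integral {-1..1} (\<lambda>t. legendreP n t) = (if n = 0 then 2 else 0)"
proof (cases n)
  case 0 then show ?thesis by simp
next
  case (Suc m)
  define f where "f = (\<lambda>x. (legendreP (Suc (Suc m)) x - legendreP m x) / (2 * real m + 3))"
  have nz: "2 * real m + 3 \<noteq> 0" by linarith
  have d: "(f has_real_derivative legendreP (Suc m) x) (at x within S)" for x S
  proof -
    have "(f has_real_derivative (D (Suc (Suc m)) x - D m x) / (2 * real m + 3)) (at x within S)"
      unfolding f_def
      by (rule DERIV_cdivide, rule has_field_derivative_at_within, rule DERIV_diff, rule P_deriv, rule P_deriv)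
    moreover have "(D (Suc (Suc m)) x - D m x) / (2 * real m + 3) = legendreP (Suc m) x"
    proof -
      have "D (Suc (Suc m)) x - D m x = (2 * real m + 3) * legendreP (Suc m) x"
        using conjunct1[OF DAB[of "Suc m" x]] by (simp add: algebra_simps)
      then show ?thesis using nz by simp
    qed
    ultimately show ?thesis by simp
  qed
  have "((\<lambda>t. legendreP (Suc m) t) has_integral (f 1 - f (-1))) {-1..1}"
    by (rule fundamental_theorem_of_calculus) (auto simp: has_real_derivative_iff_has_vector_derivative[symmetric] intro: d)
  moreover have "f 1 - f (-1) = 0"
    unfolding f_def by (simp add: P_one P_mone)
  ultimately show ?thesis using Suc by (simp add: integral_unique)
qed



fun Aq :: "nat \<Rightarrow> real" where
  "Aq 0 = 1"
| "Aq (Suc n) = Aq n * (2 * real n + 1) / (2 * real n + 2)"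

lemma Aq_Suc': "Aq (Suc n) * (2 * real n + 2) = Aq n * (2 * real n + 1)"
proof -
  have "2 * real n + 2 \<noteq> 0" by linarith
  then show ?thesis by simp
qed

lemma Aq_pos: "Aq n > 0"
  by (induction n) (auto intro!: mult_pos_pos divide_pos_pos)

definition Bq :: "int \<Rightarrow> real" where
  "Bq n = (if n < 0 then 0 else Aq (nat n))"

lemma Bq_m1: assumes "n \<ge> 0" shows "Bq (n - 1) = Bq n * (2 * of_int n) / (2 * of_int n - 1)"
proof (cases "n = 0")
  case True then show ?thesis by (simp add: Bq_def)
next
  case False
  then obtain m where m: "n = int (Suc m)" using assms by (metis int_ops(1) not0_implies_Suc nonneg_int_cases)
  have nz: "2 * real m + 1 \<noteq> 0" by linarith
  have e1: "Bq (n - 1) = Aq m" unfolding m Bq_def by simp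
  have e2: "Bq n = Aq (Suc m)" unfolding m Bq_def by (metis nat_int of_nat_less_0_iff)
  have e3: "2 * of_int n = 2 * real m + (2::real)" "2 * of_int n - 1 = 2 * real m + (1::real)" unfolding m by simp_all
  show ?thesis unfolding e1 e2 e3 using nz Aq_Suc'[of m] by (simp add: eq_divide_eq)
qed

definition Ad :: "nat \<Rightarrow> nat \<Rightarrow> nat \<Rightarrow> real" where
  "Ad a b c = (if even (a + b + c) \<and> 2 * a \<le> a + b + c \<and> 2 * b \<le> a + b + c \<and> 2 * c \<le> a + b + c
     then 2 / (2 * real ((a + b + c) div 2) + 1) * Aq ((a + b + c) div 2 - a) * Aq ((a + b + c) div 2 - b)
          * Aq ((a + b + c) div 2 - c) / Aq ((a + b + c) div 2) else 0)"

lemma Ad_sym1: "Ad a b c = Ad b a c"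
proof -
  have e: "b + a + c = a + b + c" by simp
  show ?thesis unfolding Ad_def e by (simp add: conj_ac mult_ac)
qed
lemma Ad_sym2: "Ad a b c = Ad a c b"
proof -
  have e: "a + c + b = a + b + c" by simp
  show ?thesis unfolding Ad_def e by (simp add: conj_ac mult_ac)
qed

lemma Ad_nat: "Ad (q + r) (p + r) (p + q) = 2 / (2 * real (p + q + r) + 1) * Aq p * Aq q * Aq r / Aq (p + q + r)"
proof -
  have s: "(q + r + (p + r) + (p + q)) div 2 = p + q + r" by simp
  show ?thesis unfolding Ad_def s by (simp add: ac_simps)
qed

lemma Ad_int: fixes p q r :: int
  assumes "q + r \<ge> 0" "p + r \<ge> 0" "p + q \<ge> 0"
  shows "Ad (nat (q + r)) (nat (p + r)) (nat (p + q)) = 2 / (2 * of_int (p + q + r) + 1) * Bq p * Bq q * Bq r / Bq (p + q + r)"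
proof (cases "p < 0 \<or> q < 0 \<or> r < 0")
  case True
  then have "\<not> (2 * nat (q + r) \<le> nat (q + r) + nat (p + r) + nat (p + q) \<and>
      2 * nat (p + r) \<le> nat (q + r) + nat (p + r) + nat (p + q) \<and> 2 * nat (p + q) \<le> nat (q + r) + nat (p + r) + nat (p + q))"
    using assms by auto
  then have "Ad (nat (q + r)) (nat (p + r)) (nat (p + q)) = 0" unfolding Ad_def by auto
  moreover have "Bq p * Bq q * Bq r = 0" using True by (auto simp: Bq_def)
  ultimately show ?thesis by simp
next
  case False
  then obtain p' q' r' where "p = int p'" "q = int q'" "r = int r'"
    by (metis linorder_not_less nonneg_int_cases)
  then show ?thesis using Ad_nat[of q' r' p'] by (simp add: Bq_def nat_add_distrib add.commute add.left_commute)
qed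


lemma rat_gen: fixes X Y Z a b c d e f g :: real
  assumes nz: "a \<noteq> 0" "b \<noteq> 0" "c \<noteq> 0" "d \<noteq> 0" "e \<noteq> 0" "f \<noteq> 0" "g \<noteq> 0"
  and eq: "a = 2*X-1" "b = 2*Y-1" "c = 2*Z-1" "d = 2 * X + 2 * Y + 2 * Z - 1" "e = X+Y+Z-1"
     "f = 2 * Y + 2 * Z - 1" "g = 2 * X + 2 * Z - 1"
  shows "((Y + Z) * (2 / d * (2*X / a))
          + (Y + Z - 1) * (1 / e * (2*Y/b) * (2*Z/c))) / f
       = ((X + Z) * (2 / d * (2*Y / b))
          + (X + Z - 1) * (1 / e * (2*X/a) * (2*Z/c))) / g"
proof -
  have H: "((Y + Z) * (4*X) * (b * c * e * g) + (Y + Z - 1) * (4*Y*Z) * (a * d * g)) = 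
        ((X + Z) * (4*Y) * (a * c * e * f) + (X + Z - 1) * (4*X*Z) * (b * d * f))"
    unfolding eq by (simp add: algebra_simps)
  then have H2: "((Y + Z) * (4*X) * (b * c * e * g) + (Y + Z - 1) * (4*Y*Z) * (a * d * g)) * (a*b*c*d*e) = 
        ((X + Z) * (4*Y) * (a * c * e * f) + (X + Z - 1) * (4*X*Z) * (b * d * f)) * (a*b*c*d*e)" by simp
  show ?thesis using nz by (simp add: field_simps) (insert H2, simp add: algebra_simps)
qed
lemma B_real: fixes X Y Z Bx By Bz Bt a b c d e f g h :: real
  assumes nz: "a \<noteq> 0" "b \<noteq> 0" "c \<noteq> 0" "d \<noteq> 0" "e \<noteq> 0" "f \<noteq> 0" "g \<noteq> 0" "h \<noteq> 0" "Bt \<noteq> 0"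
  and eq: "a = 2*X-1" "b = 2*Y-1" "c = 2*Z-1" "d = 2 * X + 2 * Y + 2 * Z - 1" "e = X+Y+Z-1"
     "f = 2 * Y + 2 * Z - 1" "g = 2 * X + 2 * Z - 1"
  shows "((Y+Z) * (2/d * (Bx*(2*X)/a) * By * Bz / Bt) + (Y+Z-1)*(2/h * Bx * (By*(2*Y)/b) * (Bz*(2*Z)/c) / (Bt*(2*e)/h))) / f
       = ((X+Z) * (2/d * Bx * (By*(2*Y)/b) * Bz / Bt) + (X+Z-1) * (2/h * (Bx*(2*X)/a) * By * (Bz*(2*Z)/c) / (Bt*(2*e)/h))) / g"
proof -
  define K where "K = Bx * By * Bz / Bt"
  have t1: "2/d * (Bx*(2*X)/a) * By * Bz / Bt = K * (2 / d * (2*X / a))" using nz by (simp add: K_def field_simps)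
  have t2: "2/h * Bx * (By*(2*Y)/b) * (Bz*(2*Z)/c) / (Bt*(2*e)/h) = K * (1 / e * (2*Y/b) * (2*Z/c))" using nz by (simp add: K_def field_simps)
  have t3: "2/d * Bx * (By*(2*Y)/b) * Bz / Bt = K * (2 / d * (2*Y / b))" using nz by (simp add: K_def field_simps)
  have t4: "2/h * (Bx*(2*X)/a) * By * (Bz*(2*Z)/c) / (Bt*(2*e)/h) = K * (1 / e * (2*X/a) * (2*Z/c))" using nz by (simp add: K_def field_simps)
  have R: "((Y + Z) * (2 / d * (2*X / a)) + (Y + Z - 1) * (1 / e * (2*Y/b) * (2*Z/c))) / f
       = ((X + Z) * (2 / d * (2*Y / b)) + (X + Z - 1) * (1 / e * (2*X/a) * (2*Z/c))) / g"
    by (rule rat_gen[OF nz(1-7) eq])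
  show ?thesis unfolding t1 t2 t3 t4
  proof -
    have "((Y+Z) * (K * (2 / d * (2*X / a))) + (Y+Z-1) * (K * (1 / e * (2*Y/b) * (2*Z/c)))) / f
       = K * (((Y + Z) * (2 / d * (2*X / a)) + (Y + Z - 1) * (1 / e * (2*Y/b) * (2*Z/c))) / f)"
      by (simp add: algebra_simps)
    also have "\<dots> = K * (((X + Z) * (2 / d * (2*Y / b)) + (X + Z - 1) * (1 / e * (2*X/a) * (2*Z/c))) / g)"
      using R by simp
    also have "\<dots> = ((X+Z) * (K * (2 / d * (2*Y / b))) + (X+Z-1) * (K * (1 / e * (2*X/a) * (2*Z/c)))) / g"
      by (simp add: algebra_simps)
    finally show "((Y+Z) * (K * (2 / d * (2*X / a))) + (Y+Z-1) * (K * (1 / e * (2*Y/b) * (2*Z/c)))) / f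
       = ((X+Z) * (K * (2 / d * (2*Y / b))) + (X+Z-1) * (K * (1 / e * (2*X/a) * (2*Z/c)))) / g" .
  qed
qed

lemma B_int: fixes x y z :: int
  assumes "y + z \<ge> 1" "x + z \<ge> 1" "x + y \<ge> 1"
  shows "(of_int (y + z) * (2 / (2 * of_int (x - 1 + y + z) + 1) * Bq (x - 1) * Bq y * Bq z / Bq (x - 1 + y + z))
        + of_int (y + z - 1) * (2 / (2 * of_int (x + (y - 1) + (z - 1)) + 1) * Bq x * Bq (y - 1) * Bq (z - 1) / Bq (x + (y - 1) + (z - 1))))
        / (2 * of_int (y + z - 1) + 1)
      = (of_int (x + z) * (2 / (2 * of_int (x + (y - 1) + z) + 1) * Bq x * Bq (y - 1) * Bq z / Bq (x + (y - 1) + z))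
        + of_int (x + z - 1) * (2 / (2 * of_int (x - 1 + y + (z - 1)) + 1) * Bq (x - 1) * Bq y * Bq (z - 1) / Bq (x - 1 + y + (z - 1))))
        / (2 * of_int (x + z - 1) + 1)"
proof (cases "x < 0 \<or> y < 0 \<or> z < 0")
  case True
  then show ?thesis by (auto simp: Bq_def)
next
  case False
  define t where "t = x + y + z - 1"
  have t1: "t \<ge> 1" using False assms unfolding t_def by linarith
  have e1: "x - 1 + y + z = t" "x + (y - 1) + (z - 1) = t - 1" "x + (y - 1) + z = t" "x - 1 + y + (z - 1) = t - 1"
    unfolding t_def by simp_all
  have bx: "Bq (x - 1) = Bq x * (2 * of_int x) / (2 * of_int x - 1)" using False by (intro Bq_m1) simp
  have by': "Bq (y - 1) = Bq y * (2 * of_int y) / (2 * of_int y - 1)" using False by (intro Bq_m1) simp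
  have bz: "Bq (z - 1) = Bq z * (2 * of_int z) / (2 * of_int z - 1)" using False by (intro Bq_m1) simp
  have bt: "Bq (t - 1) = Bq t * (2 * of_int t) / (2 * of_int t - 1)" using t1 by (intro Bq_m1) simp
  have Btpos: "Bq t > 0" using t1 Aq_pos by (simp add: Bq_def)
  have ni: "2 * (of_int w :: real) - 1 \<noteq> 0" for w :: int
  proof
    assume "2 * (of_int w :: real) - 1 = 0"
    then have "of_int (2 * w) = (of_int 1 :: real)" by simp
    then have "2 * w = 1" using of_int_eq_iff by blast
    then show False by presburger
  qed
  have i1: "x + y + z \<ge> 2" using t1 unfolding t_def by linarith
  have "(of_int 2 :: real) \<le> of_int (x+y+z)" "(of_int 1 :: real) \<le> of_int (y+z)" "(of_int 1 :: real) \<le> of_int (x+z)"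
    using i1 assms by (simp_all only: of_int_le_iff)
  then have le: "of_int (x+y+z) \<ge> (2::real)" "of_int (y+z) \<ge> (1::real)" "of_int (x+z) \<ge> (1::real)"
    by simp_all
  have r1: "(of_int (y + z) :: real) = of_int y + of_int z" "(of_int (x + z) :: real) = of_int x + of_int z"
     "(of_int (y + z - 1) :: real) = of_int y + of_int z - 1" "(of_int (x + z - 1) :: real) = of_int x + of_int z - 1"
     "2 * (of_int (t - 1) :: real) + 1 = 2 * of_int t - 1" by simp_all
  have BR: "((of_int y + of_int z) * (2/(2 * of_int t + 1) * (Bq x*(2* of_int x)/(2* of_int x - 1)) * Bq y * Bq z / Bq t) + (of_int y + of_int z - 1)*(2/(2 * of_int t - 1) * Bq x * (Bq y*(2* of_int y)/(2* of_int y - 1)) * (Bq z*(2* of_int z)/(2* of_int z - 1)) / (Bq t*(2* of_int t)/(2 * of_int t - 1)))) / (2 * (of_int y + of_int z - 1) + 1)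
       = ((of_int x + of_int z) * (2/(2 * of_int t + 1) * Bq x * (Bq y*(2* of_int y)/(2* of_int y - 1)) * Bq z / Bq t) + (of_int x + of_int z - 1) * (2/(2 * of_int t - 1) * (Bq x*(2* of_int x)/(2* of_int x - 1)) * Bq y * (Bq z*(2* of_int z)/(2* of_int z - 1)) / (Bq t*(2* of_int t)/(2 * of_int t - 1)))) / (2 * (of_int x + of_int z - 1) + 1)"
    apply (rule B_real)
    using ni Btpos t1 le by (simp_all add: t_def algebra_simps)
  show ?thesis unfolding e1 bx by' bz bt r1 using BR .
qed


lemma Ad_rec: "((real a + 1) * Ad (Suc a) b c + real a * Ad (a - 1) b c) / (2 * real a + 1)
   = ((real b + 1) * Ad a (Suc b) c + real b * Ad a (b - 1) c) / (2 * real b + 1)"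
proof (cases "even (a + b + c)")
  case True
  have 1: "Ad (Suc a) b c = 0" "Ad a (Suc b) c = 0" using True by (simp_all add: Ad_def)
  have 2: "real a * Ad (a - 1) b c = 0"
  proof (cases "a = 0")
    case False then have "odd (a - 1 + b + c)" using True by (cases a) simp_all
    then show ?thesis by (simp add: Ad_def)
  qed simp
  have 3: "real b * Ad a (b - 1) c = 0"
  proof (cases "b = 0")
    case False then have "odd (a + (b - 1) + c)" using True by (cases b) simp_all
    then show ?thesis by (simp add: Ad_def)
  qed simp
  show ?thesis unfolding 1 2 3 by simp
next
  case False
  then obtain k where k: "a + b + c = 2 * k + 1" by (metis oddE)
  define x where "x = (int b + int c - int a + 1) div 2"
  define y where "y = (int a + int c - int b + 1) div 2"
  define z where "z = (int a + int b - int c + 1) div 2"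
  have xyz: "y + z = int a + 1" "x + z = int b + 1" "x + y = int c + 1"
    unfolding x_def y_def z_def using k by presburger+
  have T1: "Ad (Suc a) b c = 2 / (2 * of_int (x - 1 + y + z) + 1) * Bq (x - 1) * Bq y * Bq z / Bq (x - 1 + y + z)"
  proof -
    have "nat (y + z) = Suc a" "nat (x - 1 + z) = b" "nat (x - 1 + y) = c" using xyz by simp_all
    then show ?thesis using Ad_int[of y z "x - 1"] xyz by (simp add: add.commute add.left_commute)
  qed
  have T2: "real a * Ad (a - 1) b c = of_int (y + z - 1) * (2 / (2 * of_int (x + (y - 1) + (z - 1)) + 1) * Bq x * Bq (y - 1) * Bq (z - 1) / Bq (x + (y - 1) + (z - 1)))"
  proof (cases "a = 0")
    case True then show ?thesis using xyz by simp
  next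
    case False
    have "nat (y - 1 + (z - 1)) = a - 1" "nat (x + (z - 1)) = b" "nat (x + (y - 1)) = c" using xyz False by simp_all
    then have "Ad (a - 1) b c = 2 / (2 * of_int (x + (y - 1) + (z - 1)) + 1) * Bq x * Bq (y - 1) * Bq (z - 1) / Bq (x + (y - 1) + (z - 1))"
      using Ad_int[of "y - 1" "z - 1" x] xyz False by (simp add: add.commute add.left_commute)
    moreover have "real a = of_int (y + z - 1)" using xyz by simp
    ultimately show ?thesis by simp
  qed
  have T3: "Ad a (Suc b) c = 2 / (2 * of_int (x + (y - 1) + z) + 1) * Bq x * Bq (y - 1) * Bq z / Bq (x + (y - 1) + z)"
  proof -
    have "nat (y - 1 + z) = a" "nat (x + z) = Suc b" "nat (x + (y - 1)) = c" using xyz by simp_all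
    then show ?thesis using Ad_int[of "y - 1" z x] xyz by (simp add: add.commute add.left_commute)
  qed
  have T4: "real b * Ad a (b - 1) c = of_int (x + z - 1) * (2 / (2 * of_int (x - 1 + y + (z - 1)) + 1) * Bq (x - 1) * Bq y * Bq (z - 1) / Bq (x - 1 + y + (z - 1)))"
  proof (cases "b = 0")
    case True then show ?thesis using xyz by simp
  next
    case False
    have "nat (y + (z - 1)) = a" "nat (x - 1 + (z - 1)) = b - 1" "nat (x - 1 + y) = c" using xyz False by simp_all
    then have "Ad a (b - 1) c = 2 / (2 * of_int (x - 1 + y + (z - 1)) + 1) * Bq (x - 1) * Bq y * Bq (z - 1) / Bq (x - 1 + y + (z - 1))"
      using Ad_int[of y "z - 1" "x - 1"] xyz False by (simp add: add.commute add.left_commute)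
    moreover have "real b = of_int (x + z - 1)" using xyz by simp
    ultimately show ?thesis by simp
  qed
  have ra: "real a + 1 = of_int (y + z)" "2 * real a + 1 = 2 * of_int (y + z - 1) + 1"
       "real b + 1 = of_int (x + z)" "2 * real b + 1 = 2 * of_int (x + z - 1) + 1" using xyz by simp_all
  have "y + z \<ge> 1" "x + z \<ge> 1" "x + y \<ge> 1" using xyz by simp_all
  from B_int[OF this] show ?thesis unfolding T1 T2 T3 T4 ra .
qed


lemma rec_unique: fixes f g :: "nat \<Rightarrow> nat \<Rightarrow> real"
  assumes rf: "\<And>a b. ((real a + 1) * f (Suc a) b + real a * f (a - 1) b) / (2 * real a + 1)
      = ((real b + 1) * f a (Suc b) + real b * f a (b - 1)) / (2 * real b + 1)"
  and rg: "\<And>a b. ((real a + 1) * g (Suc a) b + real a * g (a - 1) b) / (2 * real a + 1)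
      = ((real b + 1) * g a (Suc b) + real b * g a (b - 1)) / (2 * real b + 1)"
  and base: "\<And>b. f 0 b = g 0 b"
  shows "f a b = g a b"
proof -
  have solve: "p = (r * d - v) / u" if "(u * p + v) / d = r" "d \<noteq> 0" "u \<noteq> 0" for p r d v u :: real
    using that by (simp add: field_simps)
  have "\<forall>b. f a b = g a b \<and> f (Suc a) b = g (Suc a) b"
  proof (induction a)
    case 0
    show ?case
    proof
      fix b
      have "f (Suc 0) b = ((real b + 1) * f 0 (Suc b) + real b * f 0 (b - 1)) / (2 * real b + 1)"
        using rf[of 0 b] by simp
      moreover have "g (Suc 0) b = ((real b + 1) * g 0 (Suc b) + real b * g 0 (b - 1)) / (2 * real b + 1)"
        using rg[of 0 b] by simp
      ultimately show "f 0 b = g 0 b \<and> f (Suc 0) b = g (Suc 0) b" using base by simp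
    qed
  next
    case (Suc n)
    show ?case
    proof
      fix b
      have nz: "2 * real (Suc n) + 1 \<noteq> 0" "real (Suc n) + 1 \<noteq> 0" by linarith+
      have "f (Suc (Suc n)) b = (((real b + 1) * f (Suc n) (Suc b) + real b * f (Suc n) (b - 1)) / (2 * real b + 1) * (2 * real (Suc n) + 1) - real (Suc n) * f n b) / (real (Suc n) + 1)"
        by (rule solve[OF _ nz]) (use rf[of "Suc n" b] in simp)
      moreover have "g (Suc (Suc n)) b = (((real b + 1) * g (Suc n) (Suc b) + real b * g (Suc n) (b - 1)) / (2 * real b + 1) * (2 * real (Suc n) + 1) - real (Suc n) * g n b) / (real (Suc n) + 1)"
        by (rule solve[OF _ nz]) (use rg[of "Suc n" b] in simp)
      ultimately show "f (Suc n) b = g (Suc n) b \<and> f (Suc (Suc n)) b = g (Suc (Suc n)) b"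
        using Suc.IH by simp
    qed
  qed
  then show ?thesis by simp
qed

lemma triple_Ad: "legendre_triple a b c = Ad a b c"
proof -
  have slice0: "legendre_triple a b 0 = Ad a b 0" for a b
  proof (rule rec_unique[where f="\<lambda>a b. legendre_triple a b 0" and g="\<lambda>a b. Ad a b 0"])
    show "legendre_triple 0 b 0 = Ad 0 b 0" for b
      using int_P[of b] by (auto simp: legendre_triple_def Ad_def)
  qed (rule F_rec, rule Ad_rec)
  show ?thesis
  proof (rule rec_unique[where f="\<lambda>a b. legendre_triple a b c" and g="\<lambda>a b. Ad a b c"])
    show "legendre_triple 0 b c = Ad 0 b c" for b
      by (metis slice0 triple_sym1 triple_sym2 Ad_sym1 Ad_sym2)
  qed (rule F_rec, rule Ad_rec)
qed

lemma Aq_mult: "Aq d * Aq i \<le> Aq (d + i)"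
proof (induction i)
  case 0 then show ?case by simp
next
  case (Suc i)
  have r: "(2 * real i + 1) / (2 * real i + 2) \<le> (2 * real (d + i) + 1) / (2 * real (d + i) + 2)"
    by (simp add: field_simps)
  have "Aq d * Aq (Suc i) = (Aq d * Aq i) * ((2 * real i + 1) / (2 * real i + 2))" by simp
  also have "\<dots> \<le> Aq (d + i) * ((2 * real (d + i) + 1) / (2 * real (d + i) + 2))"
    by (rule mult_mono[OF Suc.IH r]) (simp_all add: Aq_pos less_imp_le)
  also have "\<dots> = Aq (d + Suc i)" by simp
  finally show ?case .
qed

theorem lemmaA2:
  fixes d k i :: nat
  assumes "k \<le> d" and "1 \<le> i"
  shows "legendre_triple d k (d - k) > legendre_triple d (k + i) (d - k + i)
       \<and> legendre_triple d (k + i) (d - k + i) > 0"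
proof -
  define C where "C = Aq (d - k) * Aq k"
  have Cpos: "C > 0" unfolding C_def using Aq_pos by simp
  have V1: "legendre_triple d k (d - k) = 2 * C / ((2 * real d + 1) * Aq d)"
  proof -
    have "legendre_triple d k (d - k) = Ad (d - k + k) (0 + k) (0 + (d - k))" using assms by (simp add: triple_Ad)
    also have "\<dots> = 2 / (2 * real (0 + (d - k) + k) + 1) * Aq 0 * Aq (d - k) * Aq k / Aq (0 + (d - k) + k)"
      by (rule Ad_nat)
    also have "\<dots> = 2 * C / ((2 * real d + 1) * Aq d)" using assms by (simp add: C_def)
    finally show ?thesis .
  qed
  have V2: "legendre_triple d (k + i) (d - k + i) = 2 * C * Aq i / ((2 * real (d + i) + 1) * Aq (d + i))"
  proof -
    have "legendre_triple d (k + i) (d - k + i) = Ad (d - k + k) (i + k) (i + (d - k))" using assms by (simp add: triple_Ad add.commute)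
    also have "\<dots> = 2 / (2 * real (i + (d - k) + k) + 1) * Aq i * Aq (d - k) * Aq k / Aq (i + (d - k) + k)"
      by (rule Ad_nat)
    also have "\<dots> = 2 * C * Aq i / ((2 * real (d + i) + 1) * Aq (d + i))" using assms by (simp add: C_def add.commute)
    finally show ?thesis .
  qed
  have p1: "Aq d > 0" "Aq i > 0" "Aq (d + i) > 0" by (simp_all add: Aq_pos)
  have key: "Aq i * ((2 * real d + 1) * Aq d) < (2 * real (d + i) + 1) * Aq (d + i)"
  proof -
    have "Aq i * ((2 * real d + 1) * Aq d) = (2 * real d + 1) * (Aq d * Aq i)" by simp
    also have "\<dots> \<le> (2 * real d + 1) * Aq (d + i)" using Aq_mult[of d i] by simp
    also have "\<dots> < (2 * real (d + i) + 1) * Aq (d + i)" using p1 assms by simp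
    finally show ?thesis .
  qed
  have pos2: "2 * C * Aq i / ((2 * real (d + i) + 1) * Aq (d + i)) > 0"
    using Cpos p1 by (intro divide_pos_pos mult_pos_pos) simp_all
  have lt: "2 * C * Aq i / ((2 * real (d + i) + 1) * Aq (d + i)) < 2 * C / ((2 * real d + 1) * Aq d)"
  proof -
    have d1: "(2 * real (d + i) + 1) * Aq (d + i) > 0" "(2 * real d + 1) * Aq d > 0" using p1 by simp_all
    have "2 * C * Aq i * ((2 * real d + 1) * Aq d) < 2 * C * ((2 * real (d + i) + 1) * Aq (d + i))"
      using key Cpos by (simp add: mult.assoc)
    then show ?thesis using d1 by (simp add: divide_less_eq less_divide_eq mult.commute mult.left_commute mult.assoc)
  qed
  show ?thesis unfolding V1 V2 using lt pos2 by simp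
qed

end
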